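(* Let $G=(V,E)$ be a finite graph and let $T$ be a set of orderings of $V$. Then there exists a strict partial order $\prec$ on $P_f(\mathbb{N}^+)$ such that $T=\{\mathrm{TBLS}(G,\prec,\tau) : \tau \text{ an ordering of } V\}$ if and only if there exists a labeling structure $S=(L,\prec_{GLS},l_0,\mathrm{UPLAB})$ such that $T$ equals the set of all orderings that can be produced by $\mathrm{GLS}(G,S)$.
   Context: $G$ has $n$ vertices; an ordering of $V$ is a bijection $\sigma:\{1,\dots,n\}\to V$. $P_f(\mathbb{N}^+)$ is the set of finite subsets of positive integers. $\mathrm{TBLS}(G,\prec,\tau)$ (for a strict partial order $\prec$ on $P_f(\mathbb{N}^+)$ and ordering $\tau$ of $V$) is the procedure: set $label(v)=\emptyset$ for every $v$; for $i=1,\dots,n$: let Eligible be the set of unnumbered vertices $x$ such that there is no unnumbered vertex $y$ with $label(x)\prec label(y)$; let $v$ be the first vertex of Eligible in $\tau$; set $\sigma(i)=v$ ($v$ becomes numbered); for every unnumbered neighbour $w$ of $v$ replace $label(w)$ by $label(w)\cup\{i\}$; output $\sigma$. A labeling structure is a quadruple $S=(L,\prec_{GLS},l_0,\mathrm{UPLAB})$ where $L$ is an arbitrary set, $\prec_{GLS}$ a strict partial order on $L$, $l_0\in L$, and $\mathrm{UPLAB}:L\times\mathbb{N}^+\to L$ a function. The General Label Search $\mathrm{GLS}(G,S)$ is the nondeterministic procedure: set $l(v)=l_0$ for every $v$; for $i=1,\dots,n$: let Eligible be the set of unnumbered vertices $v$ such that there is no unnumbered $y$ with $l(v)\prec_{GLS}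 l(y)$; choose any $v$ in Eligible; set $\sigma(i)=v$; for every unnumbered neighbour $w$ of $v$ set $l(w)=\mathrm{UPLAB}(l(w),i)$; output $\sigma$. The orderings produced by $\mathrm{GLS}(G,S)$ are all outputs over all possible choices. *)

theory Defs
  imports Main
begin

definition finite_graph :: "'a set \<Rightarrow> ('a \<Rightarrow> 'a \<Rightarrow> bool) \<Rightarrow> bool" where
  "finite_graph V E \<longleftrightarrow> finite V \<and> (\<forall>x y. E x y \<longrightarrow> x \<in> V \<and> y \<in> V)
     \<and> (\<forall>x y. E x y \<longrightarrow> E y x) \<and> (\<forall>x. \<not> E x x)"

text \<open>An ordering sigma of V is represented as the list [sigma(1), ..., sigma(n)].\<close>
definition orderings :: "'a set \<Rightarrow> 'a list set" where
  "orderings V = {xs. distinct xs \<and> set xs = V}"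

definition Pf :: "nat set set" where
  "Pf = {S. finite S \<and> 0 \<notin> S}"

definition strict_po_on :: "'b set \<Rightarrow> ('b \<Rightarrow> 'b \<Rightarrow> bool) \<Rightarrow> bool" where
  "strict_po_on A r \<longleftrightarrow> (\<forall>x\<in>A. \<not> r x x) \<and>
     (\<forall>x\<in>A. \<forall>y\<in>A. \<forall>z\<in>A. r x y \<longrightarrow> r y z \<longrightarrow> r x z)"

text \<open>TBLS: k = remaining steps, i = current step number, lab = current labels,
  num = vertices numbered so far (in order).\<close>
fun tbls_aux :: "'a set \<Rightarrow> ('a \<Rightarrow> 'a \<Rightarrow> bool) \<Rightarrow> (nat set \<Rightarrow> nat set \<Rightarrow> bool) \<Rightarrow> 'a list
     \<Rightarrow> nat \<Rightarrow> nat \<Rightarrow> ('a \<Rightarrow> nat set) \<Rightarrow> 'a list \<Rightarrow> 'a list" where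
  "tbls_aux V E p \<tau> 0 i lab num = num"
| "tbls_aux V E p \<tau> (Suc k) i lab num =
     (let U = V - set num;
          Elig = {x \<in> U. \<not> (\<exists>y\<in>U. p (lab x) (lab y))};
          v = hd (filter (\<lambda>x. x \<in> Elig) \<tau>);
          lab' = (\<lambda>w. if w \<in> U \<and> w \<noteq> v \<and> E v w then lab w \<union> {i} else lab w)
      in tbls_aux V E p \<tau> k (Suc i) lab' (num @ [v]))"

definition TBLS :: "'a set \<Rightarrow> ('a \<Rightarrow> 'a \<Rightarrow> bool) \<Rightarrow> (nat set \<Rightarrow> nat set \<Rightarrow> bool) \<Rightarrow> 'a list \<Rightarrow> 'a list" where
  "TBLS V E p \<tau> = tbls_aux V E p \<tau> (card V) 1 (\<lambda>_. {}) []"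

definition labeling_structure :: "'l set \<Rightarrow> ('l \<Rightarrow> 'l \<Rightarrow> bool) \<Rightarrow> 'l \<Rightarrow> ('l \<Rightarrow> nat \<Rightarrow> 'l) \<Rightarrow> bool" where
  "labeling_structure L p l0 up \<longleftrightarrow> strict_po_on L p \<and> l0 \<in> L \<and>
     (\<forall>l\<in>L. \<forall>i::nat. i > 0 \<longrightarrow> up l i \<in> L)"

text \<open>GLS labels along a run sigma: label of w after the first k steps.\<close>
fun gls_lab :: "('a \<Rightarrow> 'a \<Rightarrow> bool) \<Rightarrow> 'l \<Rightarrow> ('l \<Rightarrow> nat \<Rightarrow> 'l) \<Rightarrow> 'a list \<Rightarrow> nat \<Rightarrow> 'a \<Rightarrow> 'l" where
  "gls_lab E l0 up \<sigma> 0 w = l0"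
| "gls_lab E l0 up \<sigma> (Suc k) w =
     (if w \<notin> set (take (Suc k) \<sigma>) \<and> E (\<sigma> ! k) w
      then up (gls_lab E l0 up \<sigma> k w) (Suc k) else gls_lab E l0 up \<sigma> k w)"

text \<open>All orderings producible by GLS(G,S): at every step i = k+1 the chosen vertex
  sigma(i) is eligible w.r.t. the labels computed along the run.\<close>
definition gls_outputs :: "'a set \<Rightarrow> ('a \<Rightarrow> 'a \<Rightarrow> bool) \<Rightarrow> ('l \<Rightarrow> 'l \<Rightarrow> bool) \<Rightarrow> 'l
     \<Rightarrow> ('l \<Rightarrow> nat \<Rightarrow> 'l) \<Rightarrow> 'a list set" where
  "gls_outputs V E p l0 up = {\<sigma> \<in> orderings V. \<forall>k < length \<sigma>.
      (let U = V - set (take k \<sigma>) in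
        \<sigma> ! k \<in> U \<and> \<not> (\<exists>y\<in>U. p (gls_lab E l0 up \<sigma> k (\<sigma> ! k)) (gls_lab E l0 up \<sigma> k y)))}"

end

theory Submission
  imports Defs "HOL-Library.Countable_Set"
begin

definition Sl :: "('a \<Rightarrow> 'a \<Rightarrow> bool) \<Rightarrow> 'a list \<Rightarrow> 'a \<Rightarrow> nat set" where
  "Sl E xs w = {Suc j | j. j < length xs \<and> E (xs!j) w}"

lemma Sl_Nil: "Sl E [] w = {}" by (simp add: Sl_def)

lemma Sl_snoc: "Sl E (xs @ [v]) w = (if E v w then insert (Suc (length xs)) (Sl E xs w) else Sl E xs w)"
proof (rule set_eqI, rule iffI)
  fix x assume "x \<in> Sl E (xs @ [v]) w"
  then obtain j where j: "x = Suc j" "j < Suc (length xs)" "E ((xs @ [v]) ! j) w"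
    by (auto simp: Sl_def)
  show "x \<in> (if E v w then insert (Suc (length xs)) (Sl E xs w) else Sl E xs w)"
  proof (cases "j < length xs")
    case True
    then have "E (xs ! j) w" using j(3) by (simp add: nth_append)
    then have "x \<in> Sl E xs w" unfolding Sl_def using True j(1) by blast
    thus ?thesis by simp
  next
    case False
    then have "j = length xs" using j(2) by simp
    then have "E v w" "x = Suc (length xs)" using j by simp_all
    thus ?thesis by simp
  qed
next
  fix x assume x: "x \<in> (if E v w then insert (Suc (length xs)) (Sl E xs w) else Sl E xs w)"
  have A: "x \<in> Sl E (xs @ [v]) w" if a: "x \<in> Sl E xs w"
  proof -
    obtain j where j: "x = Suc j" "j < length xs" "E (xs ! j) w" using a unfolding Sl_def by blast
    then have "E ((xs @ [v]) ! j) w" by (simp add: nth_append)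
    thus ?thesis unfolding Sl_def using j by force
  qed
  have B: "x \<in> Sl E (xs @ [v]) w" if "E v w" "x = Suc (length xs)"
  proof -
    have "E ((xs @ [v]) ! length xs) w" using that by simp
    thus ?thesis unfolding Sl_def using that by force
  qed
  show "x \<in> Sl E (xs @ [v]) w" using x A B by (auto split: if_splits)
qed

lemma Sl_bound: "a \<in> Sl E xs w \<Longrightarrow> 0 < a \<and> a \<le> length xs" by (auto simp: Sl_def)

lemma Sl_finite: "finite (Sl E xs w)"
  by (rule finite_subset[where B="{..length xs}"]) (auto dest: Sl_bound)

lemma Sl_Pf: "Sl E xs w \<in> Pf"
  using Sl_finite Sl_bound by (fastforce simp: Pf_def)

definition outs :: "'a set \<Rightarrow> ('a \<Rightarrow> 'a \<Rightarrow> bool) \<Rightarrow> (nat set \<Rightarrow> nat set \<Rightarrow> bool) \<Rightarrow> 'a list set" where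
  "outs V E p = {\<sigma> \<in> orderings V. \<forall>k<length \<sigma>. \<sigma>!k \<notin> set (take k \<sigma>) \<and>
      \<not>(\<exists>y\<in>V - set (take k \<sigma>). p (Sl E (take k \<sigma>) (\<sigma>!k)) (Sl E (take k \<sigma>) y))}"

lemma gls_lab_Sl:
  assumes h0: "h {} = l0"
    and hins: "\<And>A i. finite A \<Longrightarrow> (\<forall>a\<in>A. a < i) \<Longrightarrow> h (insert i A) = up (h A) i"
  shows "k \<le> length \<sigma> \<Longrightarrow> w \<notin> set (take k \<sigma>) \<Longrightarrow> gls_lab E l0 up \<sigma> k w = h (Sl E (take k \<sigma>) w)"
proof (induction k)
  case 0 thus ?case by (simp add: Sl_Nil h0)
next
  case (Suc k)
  have tk: "take (Suc k) \<sigma> = take k \<sigma> @ [\<sigma>!k]" using Suc.prems by (simp add: take_Suc_conv_app_nth)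
  have nin: "w \<notin> set (take k \<sigma>)" using Suc.prems(2) tk by auto
  have IH: "gls_lab E l0 up \<sigma> k w = h (Sl E (take k \<sigma>) w)" using Suc.IH Suc.prems nin by simp
  have lk: "length (take k \<sigma>) = k" using Suc.prems by simp
  show ?case
  proof (cases "E (\<sigma>!k) w")
    case True
    have "\<forall>a\<in>Sl E (take k \<sigma>) w. a < Suc k" using Sl_bound lk by fastforce
    then have "h (insert (Suc k) (Sl E (take k \<sigma>) w)) = up (h (Sl E (take k \<sigma>) w)) (Suc k)"
      by (rule hins[OF Sl_finite])
    then show ?thesis using True IH Suc.prems(2) tk lk by (simp add: Sl_snoc)
  next
    case False thus ?thesis using IH Suc.prems(2) tk by (simp add: Sl_snoc)
  qed
qed

lemma gls_outputs_outs:
  assumes h0: "h {} = l0"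
    and hins: "\<And>A i. finite A \<Longrightarrow> (\<forall>a\<in>A. a < i) \<Longrightarrow> h (insert i A) = up (h A) i"
    and hq: "\<And>A B. finite A \<Longrightarrow> finite B \<Longrightarrow> pG (h A) (h B) = q A B"
  shows "gls_outputs V E pG l0 up = outs V E q"
proof -
  have key: "(let U = V - set (take k \<sigma>) in \<sigma>!k \<in> U \<and>
      \<not>(\<exists>y\<in>U. pG (gls_lab E l0 up \<sigma> k (\<sigma>!k)) (gls_lab E l0 up \<sigma> k y)))
    = (\<sigma>!k \<notin> set (take k \<sigma>) \<and>
      \<not>(\<exists>y\<in>V - set (take k \<sigma>). q (Sl E (take k \<sigma>) (\<sigma>!k)) (Sl E (take k \<sigma>) y)))"
    if "\<sigma> \<in> orderings V" "k < length \<sigma>" for \<sigma> k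
  proof -
    have inV: "\<sigma>!k \<in> V" using that by (auto simp: orderings_def)
    have gl: "\<And>w. w \<notin> set (take k \<sigma>) \<Longrightarrow> gls_lab E l0 up \<sigma> k w = h (Sl E (take k \<sigma>) w)"
      by (rule gls_lab_Sl[OF h0 hins]) (use that in auto)
    have gl2: "\<sigma>!k \<notin> set (take k \<sigma>) \<longrightarrow> (\<forall>y\<in>V - set (take k \<sigma>). pG (gls_lab E l0 up \<sigma> k (\<sigma>!k)) (gls_lab E l0 up \<sigma> k y)
        = q (Sl E (take k \<sigma>) (\<sigma>!k)) (Sl E (take k \<sigma>) y))"
    proof (intro impI ballI)
      fix y assume a: "\<sigma>!k \<notin> set (take k \<sigma>)" "y \<in> V - set (take k \<sigma>)"
      show "pG (gls_lab E l0 up \<sigma> k (\<sigma>!k)) (gls_lab E l0 up \<sigma> k y)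
        = q (Sl E (take k \<sigma>) (\<sigma>!k)) (Sl E (take k \<sigma>) y)"
        using gl[OF a(1)] gl[of y] a(2) by (simp add: hq Sl_finite)
    qed
    show ?thesis using inV gl2 by (cases "\<sigma>!k \<in> set (take k \<sigma>)") (auto simp: Let_def)
  qed
  show ?thesis unfolding gls_outputs_def outs_def using key by blast
qed

definition Elig :: "'a set \<Rightarrow> ('a \<Rightarrow> 'a \<Rightarrow> bool) \<Rightarrow> (nat set \<Rightarrow> nat set \<Rightarrow> bool) \<Rightarrow> 'a list \<Rightarrow> 'a set" where
  "Elig V E p xs = {x \<in> V - set xs. \<not>(\<exists>y\<in>V - set xs. p (Sl E xs x) (Sl E xs y))}"

definition chs :: "'a set \<Rightarrow> ('a \<Rightarrow> 'a \<Rightarrow> bool) \<Rightarrow> (nat set \<Rightarrow> nat set \<Rightarrow> bool) \<Rightarrow> 'a list \<Rightarrow> 'a list \<Rightarrow> 'a" where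
  "chs V E p \<tau> xs = hd (filter (\<lambda>x. x \<in> Elig V E p xs) \<tau>)"

lemma tbls_aux_char:
  assumes hE: "\<And>x y. E x y \<Longrightarrow> y \<in> V"
  shows "(\<forall>w. w \<notin> set num \<longrightarrow> lab w = Sl E num w) \<Longrightarrow> i = Suc (length num) \<Longrightarrow>
   length (tbls_aux V E p \<tau> k i lab num) = length num + k \<and>
   take (length num) (tbls_aux V E p \<tau> k i lab num) = num \<and>
   (\<forall>j. length num \<le> j \<longrightarrow> j < length num + k \<longrightarrow>
      tbls_aux V E p \<tau> k i lab num ! j = chs V E p \<tau> (take j (tbls_aux V E p \<tau> k i lab num)))"
proof (induction k arbitrary: i lab num)
  case 0 thus ?case by simp
next
  case (Suc k)
  define U where "U = V - set num"
  define El where "El = {x \<in> U. \<not>(\<exists>y\<in>U. p (lab x) (lab y))}"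
  define v where "v = hd (filter (\<lambda>x. x \<in> El) \<tau>)"
  define lab' where "lab' = (\<lambda>w. if w \<in> U \<and> w \<noteq> v \<and> E v w then lab w \<union> {i} else lab w)"
  have rec: "tbls_aux V E p \<tau> (Suc k) i lab num = tbls_aux V E p \<tau> k (Suc i) lab' (num @ [v])"
    by (simp add: U_def El_def v_def lab'_def Let_def)
  have El_eq: "El = Elig V E p num" using Suc.prems(1) by (auto simp: El_def U_def Elig_def)
  have v_eq: "v = chs V E p \<tau> num" by (simp add: v_def El_eq chs_def)
  have inv: "\<forall>w. w \<notin> set (num@[v]) \<longrightarrow> lab' w = Sl E (num@[v]) w"
  proof (intro allI impI)
    fix w assume "w \<notin> set (num@[v])"
    then show "lab' w = Sl E (num@[v]) w"
      using Suc.prems hE[of v w] by (auto simp: lab'_def U_def Sl_snoc)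
  qed
  define r where "r = tbls_aux V E p \<tau> k (Suc i) lab' (num @ [v])"
  have IH: "length r = length (num@[v]) + k \<and> take (length (num@[v])) r = num@[v] \<and>
     (\<forall>j. length (num@[v]) \<le> j \<longrightarrow> j < length (num@[v]) + k \<longrightarrow> r ! j = chs V E p \<tau> (take j r))"
    unfolding r_def using Suc.IH[OF inv] Suc.prems(2) by simp
  have t1: "take (Suc (length num)) r = num @ [v]" using IH by simp
  have t0: "take (length num) r = num"
    by (metis t1 butlast_snoc butlast_take diff_Suc_1 le_add1 length_append_singleton length_take min.absorb2 plus_1_eq_Suc add.commute IH)
  have jj: "r ! j = chs V E p \<tau> (take j r)" if "length num \<le> j" "j < length num + Suc k" for j
  proof (cases "j = length num")
    case True
    have "r ! j = (take (Suc (length num)) r) ! j" using True by simp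
    also have "\<dots> = v" using t1 True by simp
    finally show ?thesis using True t0 v_eq by simp
  next
    case False thus ?thesis using IH that by simp
  qed
  show ?case unfolding rec r_def[symmetric] using IH t0 jj by simp
qed

lemma TBLS_char:
  assumes hE: "\<And>x y. E x y \<Longrightarrow> y \<in> V"
  shows "length (TBLS V E p \<tau>) = card V \<and>
    (\<forall>j<card V. TBLS V E p \<tau> ! j = chs V E p \<tau> (take j (TBLS V E p \<tau>)))"
  using tbls_aux_char[OF hE, where num="[]" and lab="\<lambda>_. {}" and i=1 and p=p and \<tau>=\<tau> and k="card V"] by (simp add: TBLS_def Sl_Nil)

lemma max_exists:
  "finite U \<Longrightarrow> U \<noteq> {} \<Longrightarrow> (\<forall>x\<in>U. \<not> r (g x) (g x)) \<Longrightarrow>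
   (\<forall>x\<in>U. \<forall>y\<in>U. \<forall>z\<in>U. r (g x) (g y) \<longrightarrow> r (g y) (g z) \<longrightarrow> r (g x) (g z)) \<Longrightarrow>
   \<exists>x\<in>U. \<not>(\<exists>y\<in>U. r (g x) (g y))"
proof (induction U rule: finite_ne_induct)
  case (singleton x)
  have "\<not> r (g x) (g x)" using singleton.prems(1) by simp
  then show ?case by blast
next
  case (insert a F)
  have p1: "\<forall>x\<in>F. \<not> r (g x) (g x)" using insert.prems(1) by blast
  have p2: "\<forall>x\<in>F. \<forall>y\<in>F. \<forall>z\<in>F. r (g x) (g y) \<longrightarrow> r (g y) (g z) \<longrightarrow> r (g x) (g z)"
    using insert.prems(2) by blast
  obtain m where m: "m \<in> F" "\<not>(\<exists>y\<in>F. r (g m) (g y))" using insert.IH[OF p1 p2] by blast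
  show ?case
  proof (cases "r (g m) (g a)")
    case True
    have "\<not>(\<exists>y\<in>insert a F. r (g a) (g y))"
    proof
      assume "\<exists>y\<in>insert a F. r (g a) (g y)"
      then obtain y where y: "y \<in> insert a F" "r (g a) (g y)" by blast
      show False
      proof (cases "y = a")
        case True thus False using y insert.prems(1) by blast
      next
        case False
        then have "y \<in> F" using y by auto
        have "m \<in> insert a F" "a \<in> insert a F" "y \<in> insert a F" using m(1) \<open>y \<in> F\<close> by auto
        then have "r (g m) (g y)" using insert.prems(2) True y(2) by blast
        thus False using m \<open>y \<in> F\<close> by blast
      qed
    qed
    thus ?thesis by blast
  next
    case False thus ?thesis using m by blast
  qed
qed

lemma Elig_ne:
  assumes "strict_po_on Pf p" "finite V" "V - set xs \<noteq> {}"
  shows "Elig V E p xs \<noteq> {}"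
proof -
  have "\<exists>x\<in>V - set xs. \<not>(\<exists>y\<in>V - set xs. p (Sl E xs x) (Sl E xs y))"
    apply (rule max_exists)
    using assms(2) apply simp
    using assms(3) apply simp
    using assms(1) Sl_Pf[of E xs] unfolding strict_po_on_def by blast+
  thus ?thesis by (auto simp: Elig_def)
qed

lemma chs_in:
  assumes "strict_po_on Pf p" "finite V" "set \<tau> = V" "V - set xs \<noteq> {}"
  shows "chs V E p \<tau> xs \<in> Elig V E p xs"
proof -
  obtain x where x: "x \<in> Elig V E p xs" using Elig_ne[OF assms(1,2,4)] by blast
  have "x \<in> set \<tau>" using x assms(3) by (auto simp: Elig_def)
  then have "filter (\<lambda>x. x \<in> Elig V E p xs) \<tau> \<noteq> []" using x by (auto simp: filter_empty_conv)
  then have "hd (filter (\<lambda>x. x \<in> Elig V E p xs) \<tau>) \<in> set (filter (\<lambda>x. x \<in> Elig V E p xs) \<tau>)"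
    by (rule hd_in_set)
  thus ?thesis by (simp add: chs_def)
qed

lemma distinct_take_nth: "(\<forall>j<length r. r!j \<notin> set (take j r)) \<Longrightarrow> distinct r"
  unfolding distinct_conv_nth
proof (intro allI impI)
  fix i j assume H: "\<forall>j<length r. r!j \<notin> set (take j r)" "i < length r" "j < length r" "i \<noteq> j"
  show "r!i \<noteq> r!j"
  proof (cases "i < j")
    case True
    have "r!i \<in> set (take j r)" using True H by (auto simp: in_set_conv_nth intro!: exI[of _ i])
    thus ?thesis using H(1) H(3) by metis
  next
    case False
    then have "j < i" using H by simp
    have "r!j \<in> set (take i r)" using \<open>j < i\<close> H by (auto simp: in_set_conv_nth intro!: exI[of _ j])
    thus ?thesis using H(1) H(2) by metis
  qed
qed

lemma TBLS_in_outs: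
  assumes G: "finite_graph V E" and P: "strict_po_on Pf p" and t: "\<tau> \<in> orderings V"
  shows "TBLS V E p \<tau> \<in> outs V E p"
proof -
  define r where "r = TBLS V E p \<tau>"
  have hE: "\<And>x y. E x y \<Longrightarrow> y \<in> V" using G by (auto simp: finite_graph_def)
  have fV: "finite V" using G by (auto simp: finite_graph_def)
  have st: "set \<tau> = V" using t by (auto simp: orderings_def)
  have ch: "length r = card V" "\<And>j. j < card V \<Longrightarrow> r ! j = chs V E p \<tau> (take j r)"
    using TBLS_char[OF hE, where p=p and \<tau>=\<tau>] unfolding r_def by auto
  have el: "r ! j \<in> Elig V E p (take j r)" if "j < length r" for j
  proof -
    have "V - set (take j r) \<noteq> {}"
    proof
      assume "V - set (take j r) = {}"
      then have "card V \<le> card (set (take j r))" by (intro card_mono) auto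
      also have "\<dots> \<le> length (take j r)" by (rule card_length)
      also have "\<dots> = j" using that by simp
      finally show False using that ch(1) by simp
    qed
    thus ?thesis using chs_in[OF P fV st] ch that by simp
  qed
  have d: "distinct r" using el by (intro distinct_take_nth) (auto simp: Elig_def)
  have sub: "set r \<subseteq> V" using el by (auto simp: in_set_conv_nth Elig_def)
  have "set r = V" using sub fV d ch(1) by (metis card_subset_eq distinct_card)
  then have "r \<in> orderings V" using d by (simp add: orderings_def)
  then show ?thesis unfolding r_def[symmetric] outs_def using el by (auto simp: Elig_def)
qed

lemma outs_fixed:
  assumes G: "finite_graph V E" and P: "strict_po_on Pf p" and s: "\<sigma> \<in> outs V E p"
  shows "TBLS V E p \<sigma> = \<sigma>"
proof -
  define r where "r = TBLS V E p \<sigma>"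
  have hE: "\<And>x y. E x y \<Longrightarrow> y \<in> V" using G by (auto simp: finite_graph_def)
  have so: "\<sigma> \<in> orderings V" using s by (simp add: outs_def)
  have "distinct \<sigma>" "set \<sigma> = V" using so by (auto simp: orderings_def)
  then have ls: "length \<sigma> = card V" using distinct_card[of \<sigma>] by simp
  have ch: "length r = card V" "\<And>j. j < card V \<Longrightarrow> r ! j = chs V E p \<sigma> (take j r)"
    using TBLS_char[OF hE, where p=p and \<tau>=\<sigma>] unfolding r_def by auto
  have step: "chs V E p \<sigma> (take j \<sigma>) = \<sigma> ! j" if "j < length \<sigma>" for j
  proof -
    have e: "\<sigma>!j \<in> Elig V E p (take j \<sigma>)"
      using s that so unfolding outs_def Elig_def orderings_def by auto
    have f0: "filter (\<lambda>x. x \<in> Elig V E p (take j \<sigma>)) (take j \<sigma>) = []"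
      by (auto simp: filter_empty_conv Elig_def)
    have "\<sigma> = take j \<sigma> @ \<sigma>!j # drop (Suc j) \<sigma>" using that by (simp add: id_take_nth_drop)
    then have "filter (\<lambda>x. x \<in> Elig V E p (take j \<sigma>)) \<sigma> = \<sigma>!j # filter (\<lambda>x. x \<in> Elig V E p (take j \<sigma>)) (drop (Suc j) \<sigma>)"
      using f0 e by (metis filter.simps(2) filter_append self_append_conv2)
    thus ?thesis by (simp add: chs_def)
  qed
  have "j \<le> card V \<Longrightarrow> take j r = take j \<sigma>" for j
  proof (induction j)
    case 0 thus ?case by simp
  next
    case (Suc j)
    have "take (Suc j) r = take j r @ [r!j]" using Suc.prems ch(1) by (simp add: take_Suc_conv_app_nth)
    also have "r!j = \<sigma>!j" using ch(2)[of j] Suc step[of j] ls by simp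
    also have "take (Suc j) \<sigma> = take j \<sigma> @ [\<sigma>!j]" using Suc.prems ls by (simp add: take_Suc_conv_app_nth)
    ultimately show ?case using Suc by simp
  qed
  then have "take (card V) r = take (card V) \<sigma>" by simp
  thus ?thesis using ch(1) ls unfolding r_def by simp
qed

lemma TBLS_outs:
  assumes G: "finite_graph V E" and P: "strict_po_on Pf p"
  shows "{TBLS V E p \<tau> | \<tau>. \<tau> \<in> orderings V} = outs V E p"
proof
  show "{TBLS V E p \<tau> | \<tau>. \<tau> \<in> orderings V} \<subseteq> outs V E p" using TBLS_in_outs[OF G P] by blast
next
  show "outs V E p \<subseteq> {TBLS V E p \<tau> | \<tau>. \<tau> \<in> orderings V}"
  proof
    fix \<sigma> assume s: "\<sigma> \<in> outs V E p"
    then have "\<sigma> \<in> orderings V" by (simp add: outs_def)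
    thus "\<sigma> \<in> {TBLS V E p \<tau> | \<tau>. \<tau> \<in> orderings V}" using outs_fixed[OF G P s] by force
  qed
qed

lemma sorted_insert_max:
  assumes "finite A" "\<forall>a\<in>A. a < (i::nat)"
  shows "sorted_list_of_set (insert i A) = sorted_list_of_set A @ [i]"
proof -
  have "sorted_wrt (<) (sorted_list_of_set A @ [i])"
    using assms by (simp add: sorted_wrt_append)
  moreover have "set (sorted_list_of_set A @ [i]) = insert i A" using assms by simp
  moreover have "sorted_wrt (<) (sorted_list_of_set (insert i A))"
    using strict_sorted_list_of_set[of "insert i A"] by simp
  moreover have "set (sorted_list_of_set (insert i A)) = insert i A"
    by (rule set_sorted_list_of_set) (simp add: assms)
  ultimately show ?thesis using strict_sorted_equal by metis
qed

lemma foldl_in_L: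
  assumes "\<forall>l\<in>L. \<forall>i::nat. i > 0 \<longrightarrow> up l i \<in> L"
  shows "l \<in> L \<Longrightarrow> \<forall>i\<in>set xs. i > 0 \<Longrightarrow> foldl up l xs \<in> L"
  using assms by (induction xs arbitrary: l) auto

theorem theorem9:
  fixes V :: "'a set" and E :: "'a \<Rightarrow> 'a \<Rightarrow> bool" and T :: "'a list set"
  assumes "finite_graph V E"
    and "T \<subseteq> orderings V"
    and "infinite (UNIV :: 'l set)"
  shows "(\<exists>p. strict_po_on Pf p \<and> T = {TBLS V E p \<tau> | \<tau>. \<tau> \<in> orderings V})
     \<longleftrightarrow> (\<exists>(L :: 'l set) pG l0 up. labeling_structure L pG l0 up \<and> T = gls_outputs V E pG l0 up)"
proof
  assume "\<exists>p. strict_po_on Pf p \<and> T = {TBLS V E p \<tau> | \<tau>. \<tau> \<in> orderings V}"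
  then obtain p where P: "strict_po_on Pf p" and T: "T = {TBLS V E p \<tau> | \<tau>. \<tau> \<in> orderings V}"
    by blast
  have To: "T = outs V E p" using T TBLS_outs[OF assms(1) P] by simp
  obtain f :: "nat \<Rightarrow> 'l" where f: "inj f" using infinite_countable_subset[OF assms(3)] by blast
  define F where "F = {A::nat set. finite A}"
  define e where "e = f \<circ> to_nat_on F"
  have ie: "inj_on e F" unfolding e_def
    by (rule comp_inj_on) (auto simp: F_def countable_Collect_finite intro: inj_on_subset[OF f])
  have ee: "\<And>A. finite A \<Longrightarrow> inv_into F e (e A) = A" using ie by (simp add: F_def inv_into_f_f)
  define L where "L = e ` Pf"
  define pG where "pG = (\<lambda>a b. p (inv_into F e a) (inv_into F e b))"
  define l0 where "l0 = e {}"
  define up where "up = (\<lambda>l i. e (insert i (inv_into F e l)))"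
  have PfF: "\<And>A. A \<in> Pf \<Longrightarrow> finite A" by (simp add: Pf_def)
  have ls: "labeling_structure L pG l0 up"
    unfolding labeling_structure_def
  proof (intro conjI)
    have Pi: "\<And>A. A \<in> Pf \<Longrightarrow> \<not> p A A" and
      Pt: "\<And>A B C. A \<in> Pf \<Longrightarrow> B \<in> Pf \<Longrightarrow> C \<in> Pf \<Longrightarrow> p A B \<Longrightarrow> p B C \<Longrightarrow> p A C"
      using P unfolding strict_po_on_def by blast+
    have pe: "\<And>A B. A \<in> Pf \<Longrightarrow> B \<in> Pf \<Longrightarrow> pG (e A) (e B) = p A B"
      unfolding pG_def using ee PfF by simp
    show "strict_po_on L pG" unfolding strict_po_on_def
    proof (intro conjI ballI impI)
      fix x assume "x \<in> L"
      then obtain A where "A \<in> Pf" "x = e A" unfolding L_def by blast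
      thus "\<not> pG x x" using pe Pi by simp
    next
      fix x y z assume "x \<in> L" "y \<in> L" "z \<in> L" and xy: "pG x y" and yz: "pG y z"
      then obtain A B C where "A \<in> Pf" "x = e A" "B \<in> Pf" "y = e B" "C \<in> Pf" "z = e C"
        unfolding L_def by blast
      thus "pG x z" using pe Pt xy yz by metis
    qed
    show "l0 \<in> L" by (auto simp: L_def l0_def Pf_def)
    show "\<forall>l\<in>L. \<forall>i. 0 < i \<longrightarrow> up l i \<in> L"
      by (auto simp: L_def up_def ee PfF) (auto simp: Pf_def)
  qed
  have "gls_outputs V E pG l0 up = outs V E p"
    by (rule gls_outputs_outs[where h=e]) (auto simp: l0_def up_def pG_def ee)
  then show "\<exists>(L :: 'l set) pG l0 up. labeling_structure L pG l0 up \<and> T = gls_outputs V E pG l0 up"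
    using ls To by blast
next
  assume "\<exists>(L :: 'l set) pG l0 up. labeling_structure L pG l0 up \<and> T = gls_outputs V E pG l0 up"
  then obtain L :: "'l set" and pG l0 up where ls: "labeling_structure L pG l0 up"
    and T: "T = gls_outputs V E pG l0 up" by blast
  define h where "h = (\<lambda>A. foldl up l0 (sorted_list_of_set A))"
  define p where "p = (\<lambda>A B. pG (h A) (h B))"
  have hL: "h A \<in> L" if "A \<in> Pf" for A
  proof -
    have "finite A" "0 \<notin> A" using that by (auto simp: Pf_def)
    moreover have "\<forall>i\<in>A. 0 < i" using \<open>0 \<notin> A\<close> by (metis gr0I)
    ultimately show ?thesis unfolding h_def using ls
      by (intro foldl_in_L) (auto simp: labeling_structure_def)
  qed
  have P: "strict_po_on Pf p"
    using ls hL unfolding labeling_structure_def strict_po_on_def p_def by blast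
  have "gls_outputs V E pG l0 up = outs V E p"
  proof (rule gls_outputs_outs[where h=h])
    show "h {} = l0" by (simp add: h_def)
    show "h (insert i A) = up (h A) i" if "finite A" "\<forall>a\<in>A. a < i" for A i
      unfolding h_def sorted_insert_max[OF that] by simp
    show "pG (h A) (h B) = p A B" for A B by (simp add: p_def)
  qed
  then have "T = {TBLS V E p \<tau> | \<tau>. \<tau> \<in> orderings V}" using T TBLS_outs[OF assms(1) P] by simp
  then show "\<exists>p. strict_po_on Pf p \<and> T = {TBLS V E p \<tau> | \<tau>. \<tau> \<in> orderings V}" using P by blast
qed

end
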